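(* Let $d\ge3$ and $p\colon S^{d-1}\to(0,\infty)$ Borel measurable with $\int_{S^{d-1}}p\,d\sigma_{d-1}\in(0,\infty)$. Assume there is a Borel set $C$ with $\sigma_{d-1}(C)>0$, $\inf_{x\in C}p(x)>0$ and $\sup_{x\in S^{d-1}}p(x)<\infty$, and set $\beta:=\frac{\inf_{y\in C}p(y)}{\sup_{y\in S^{d-1}}p(y)}$. Then for all $x\in S^{d-1}$ and all Borel $A\subseteq S^{d-1}$, $$\frac1{p(x)}\int_0^{p(x)}\int_{S^{d-2}_x}\int_{L(x,v,t)}\mathbb 1_A(\gamma_{(x,v)}(\theta))\,d\theta\,\mu_x(dv)\,dt\ \ge\ \beta\,\sigma_{d-1}(A\cap C).$$
   Context: $S^{d-1}$ is the unit sphere in $\mathbb R^d$, $\sigma_{d-1}$ its volume measure. For $x\in S^{d-1}$: $S^{d-2}_x:=\{v\in S^{d-1}:\langle v,x\rangle=0\}$ with natural volume measure $\mu_x$ (image of $\sigma_{d-2}$ under a linear isometry of $\mathbb R^{d-1}$ onto $x^\perp$). $\gamma_{(x,v)}(\theta):=\cos(\theta)x+\sin(\theta)v$, and $L(x,v,t):=\{\theta\in[0,2\pi):p(\gamma_{(x,v)}(\theta))>t\}$. *)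

theory Defs
  imports "HOL-Analysis.Analysis"
begin

text \<open>Surface (volume) measure on the unit sphere of a Euclidean space 'a of dimension d,
  defined as the cone measure: sigma(A) = d * lebesgue{y. 0 < |y| \<le> 1, y/|y| \<in> A}.\<close>
definition sphere_measure :: "'a::euclidean_space measure" where
  "sphere_measure =
     scale_measure (of_nat DIM('a))
       (distr (restrict_space lborel (cball 0 1 - {0}))
              (restrict_space borel (sphere (0::'a) 1))
              (\<lambda>y. y /\<^sub>R norm y))"

definition gam :: "'a::real_normed_vector \<Rightarrow> 'a \<Rightarrow> real \<Rightarrow> 'a" where
  "gam x v \<theta> = cos \<theta> *\<^sub>R x + sin \<theta> *\<^sub>R v"

definition Lset :: "('a::real_normed_vector \<Rightarrow> real) \<Rightarrow> 'a \<Rightarrow> 'a \<Rightarrow> real \<Rightarrow> real set" where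
  "Lset p x v t = {\<theta>. 0 \<le> \<theta> \<and> \<theta> < 2 * pi \<and> p (gam x v \<theta>) > t}"

text \<open>A linear isometry of 'b (playing the role of R^(d-1)) onto the orthogonal
  complement of x in 'a.\<close>
definition perp_isometry :: "'a::euclidean_space \<Rightarrow> ('b::euclidean_space \<Rightarrow> 'a) \<Rightarrow> bool" where
  "perp_isometry x T \<longleftrightarrow> linear T \<and> (\<forall>u. norm (T u) = norm u) \<and>
      range T = {v. v \<bullet> x = 0}"

text \<open>mu_x: image of sigma_(d-2) under such an isometry.\<close>
definition great_sphere_measure :: "('b::euclidean_space \<Rightarrow> 'a::euclidean_space) \<Rightarrow> 'a measure" where
  "great_sphere_measure T = distr (sphere_measure :: 'b measure) borel T"

end

theory Submission
  imports Defs
begin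



lemma lborel_translate:
  fixes h :: "'a::euclidean_space \<Rightarrow> ennreal"
  assumes [measurable]: "h \<in> borel_measurable borel"
  shows "(\<integral>\<^sup>+z. h (t + z) \<partial>lborel) = (\<integral>\<^sup>+z. h z \<partial>lborel)"
proof -
  have "(\<integral>\<^sup>+z. h z \<partial>lborel) = (\<integral>\<^sup>+z. h z \<partial>distr lborel borel ((+) t))"
    by (simp add: lborel_distr_plus)
  also have "\<dots> = (\<integral>\<^sup>+z. h (t + z) \<partial>lborel)"
    by (subst nn_integral_distr) auto
  finally show ?thesis by simp
qed

lemma lborel_reflect:
  fixes h :: "'a::euclidean_space \<Rightarrow> ennreal"
  assumes [measurable]: "h \<in> borel_measurable borel"
  shows "(\<integral>\<^sup>+z. h (t - z) \<partial>lborel) = (\<integral>\<^sup>+z. h z \<partial>lborel)"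
proof -
  have eq: "distr lborel borel (\<lambda>z. t + (-1) *\<^sub>R z) = (lborel :: 'a measure)"
    using lborel_affine[of "-1" t] by (simp add: density_1)
  have fe: "(\<lambda>z. t + (-1) *\<^sub>R z) = (-) t" by auto
  have "(\<integral>\<^sup>+z. h z \<partial>lborel) = (\<integral>\<^sup>+z. h z \<partial>distr lborel borel (\<lambda>z. t + (-1) *\<^sub>R z))"
    by (simp only: eq)
  also have "\<dots> = (\<integral>\<^sup>+z. h (t - z) \<partial>lborel)"
    by (subst nn_integral_distr) auto
  finally show ?thesis by simp
qed

lemma rot_lborel:
  fixes L :: "'c::euclidean_space \<Rightarrow> 'a::euclidean_space"
  assumes lin: "linear L" and iso: "\<And>w. norm (L w) = norm w" and surj: "surj L"
    and dim: "DIM('c) = DIM('a)"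
  shows "distr lborel borel L = lborel"
proof -
  have contL: "continuous_on UNIV L"
    using lin by (simp add: linear_continuous_on linear_linear)
  have Lm[measurable]: "L \<in> borel_measurable borel"
    using contL by (rule borel_measurable_continuous_onI)
  define M where "M = distr lborel borel L"
  have sM[simp]: "sets M = sets borel" "space M = UNIV" by (simp_all add: M_def)
  have mM[simp]: "measurable M = measurable borel" by (rule ext, rule measurable_cong_sets) auto
  have preball: "L -` cball 0 r = cball 0 r" for r
    by (auto simp: iso)
  have Mball: "emeasure M (cball 0 r) = emeasure lborel (cball (0::'c) r)" for r
    unfolding M_def by (subst emeasure_distr) (auto simp: preball)
  have sfM: "sigma_finite_measure M"
  proof
    show "\<exists>A. countable A \<and> A \<subseteq> sets M \<and> \<Union> A = space M \<and> (\<forall>a\<in>A. emeasure M a \<noteq> \<infinity>)"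
    proof (intro exI conjI)
      show "countable (range (\<lambda>n::nat. cball (0::'a) (real n)))" by simp
      show "range (\<lambda>n::nat. cball (0::'a) (real n)) \<subseteq> sets M" by auto
      show "\<Union> (range (\<lambda>n::nat. cball (0::'a) (real n))) = space M"
        by (auto simp: real_arch_simple)
      show "\<forall>a\<in>range (\<lambda>n::nat. cball (0::'a) (real n)). emeasure M a \<noteq> \<infinity>"
        using emeasure_lborel_cball_finite[of "0::'c"] by (auto simp: Mball less_top)
    qed
  qed
  interpret M: sigma_finite_measure M by (rule sfM)
  interpret P1: pair_sigma_finite M lborel ..
  interpret P2: pair_sigma_finite lborel M ..
  have mP1: "measurable (M \<Otimes>\<^sub>M lborel) = measurable (borel \<Otimes>\<^sub>M borel)"
    by (intro ext measurable_cong_sets sets_pair_measure_cong) auto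
  have mP2: "measurable (lborel \<Otimes>\<^sub>M M) = measurable (borel \<Otimes>\<^sub>M borel)"
    by (intro ext measurable_cong_sets sets_pair_measure_cong) auto
  have transM: "(\<integral>\<^sup>+x. h (x + t) \<partial>M) = (\<integral>\<^sup>+x. h x \<partial>M)"
    if [measurable]: "h \<in> borel_measurable borel" for h t
  proof -
    obtain t' where t': "t = L t'" using surj by (metis surjD)
    have "(\<integral>\<^sup>+x. h (x + t) \<partial>M) = (\<integral>\<^sup>+w. h (L w + t) \<partial>lborel)"
      unfolding M_def by (subst nn_integral_distr) auto
    also have "\<dots> = (\<integral>\<^sup>+w. (\<lambda>w. h (L w)) (t' + w) \<partial>lborel)"
      by (simp add: t' linear_add[OF lin] add.commute)
    also have "\<dots> = (\<integral>\<^sup>+w. h (L w) \<partial>lborel)"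
      by (rule lborel_translate) measurable
    also have "\<dots> = (\<integral>\<^sup>+x. h x \<partial>M)"
      unfolding M_def by (subst nn_integral_distr) auto
    finally show ?thesis .
  qed
  have key: "(\<integral>\<^sup>+x. f x \<partial>M) * (\<integral>\<^sup>+y. g y \<partial>lborel) = (\<integral>\<^sup>+x. g x \<partial>M) * (\<integral>\<^sup>+y. f y \<partial>lborel)"
    if [measurable]: "f \<in> borel_measurable borel" "g \<in> borel_measurable borel" for f g :: "'a \<Rightarrow> ennreal"
  proof -
    have "(\<integral>\<^sup>+x. f x \<partial>M) * (\<integral>\<^sup>+y. g y \<partial>lborel) = (\<integral>\<^sup>+x. f x * (\<integral>\<^sup>+y. g y \<partial>lborel) \<partial>M)"
      by (simp add: nn_integral_multc)
    also have "\<dots> = (\<integral>\<^sup>+x. f x * (\<integral>\<^sup>+z. g (x + z) \<partial>lborel) \<partial>M)"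
      by (simp add: lborel_translate)
    also have "\<dots> = (\<integral>\<^sup>+x. (\<integral>\<^sup>+z. f x * g (x + z) \<partial>lborel) \<partial>M)"
      by (simp add: nn_integral_cmult)
    also have "\<dots> = (\<integral>\<^sup>+z. (\<integral>\<^sup>+x. f x * g (x + z) \<partial>M) \<partial>lborel)"
      by (rule P1.Fubini'[symmetric]) (unfold mP1, measurable)
    also have "\<dots> = (\<integral>\<^sup>+z. (\<integral>\<^sup>+x. f (x - z) * g x \<partial>M) \<partial>lborel)"
    proof (rule nn_integral_cong)
      fix z
      have "(\<integral>\<^sup>+x. f x * g (x + z) \<partial>M) = (\<integral>\<^sup>+x. (\<lambda>x. f (x - z) * g x) (x + z) \<partial>M)"
        by simp
      also have "\<dots> = (\<integral>\<^sup>+x. f (x - z) * g x \<partial>M)"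
        by (rule transM) measurable
      finally show "(\<integral>\<^sup>+x. f x * g (x + z) \<partial>M) = (\<integral>\<^sup>+x. f (x - z) * g x \<partial>M)" .
    qed
    also have "\<dots> = (\<integral>\<^sup>+x. (\<integral>\<^sup>+z. f (x - z) * g x \<partial>lborel) \<partial>M)"
      by (rule P1.Fubini') (unfold mP1, measurable)
    also have "\<dots> = (\<integral>\<^sup>+x. g x * (\<integral>\<^sup>+z. f (x - z) \<partial>lborel) \<partial>M)"
      by (rule nn_integral_cong, subst nn_integral_cmult[symmetric]) (auto simp: mult.commute)
    also have "\<dots> = (\<integral>\<^sup>+x. g x * (\<integral>\<^sup>+z. f z \<partial>lborel) \<partial>M)"
      by (simp add: lborel_reflect)
    also have "\<dots> = (\<integral>\<^sup>+x. g x \<partial>M) * (\<integral>\<^sup>+y. f y \<partial>lborel)"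
      by (simp add: nn_integral_multc)
    finally show ?thesis .
  qed
  define V where "V = emeasure lborel (cball (0::'a) 1)"
  have V: "V \<noteq> 0" "V \<noteq> \<infinity>"
  proof -
    have "unit_ball_vol (real DIM('a)) \<noteq> 0" using unit_ball_vol_pos[of "real DIM('a)"] by linarith
    then show "V \<noteq> 0" "V \<noteq> \<infinity>" unfolding V_def by (simp_all add: emeasure_cball)
  qed
  have MV: "emeasure M (cball 0 1) = V"
    unfolding V_def Mball by (simp add: emeasure_cball dim)
  show ?thesis
  proof (rule measure_eqI)
    show "sets (distr lborel borel L) = sets lborel" by simp
    fix A assume A: "A \<in> sets (distr lborel borel L)"
    then have [measurable]: "A \<in> sets borel" by simp
    have "(\<integral>\<^sup>+x. indicator A x \<partial>M) * (\<integral>\<^sup>+y. indicator (cball (0::'a) 1) y \<partial>lborel) =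
          (\<integral>\<^sup>+x. indicator (cball 0 1) x \<partial>M) * (\<integral>\<^sup>+y. indicator A y \<partial>(lborel::'a measure))"

      by (rule key) (rule borel_measurable_indicator, simp)+
    then have "emeasure M A * V = V * emeasure lborel A"
      using MV by (simp add: V_def)
    then have "V * emeasure M A = V * emeasure lborel A"
      by (simp add: mult.commute)
    then have "emeasure M A = emeasure lborel A"
      using V by (auto simp: ennreal_mult_cancel_left)
    then show "emeasure (distr lborel borel L) A = emeasure lborel A"
      by (simp add: M_def)
  qed
qed




lemma sets_sphere_measure: "sets (sphere_measure :: 'a::euclidean_space measure) = sets (restrict_space borel (sphere (0::'a) 1))"
  unfolding sphere_measure_def by simp

lemma sphere_measure_setsD:
  assumes "A \<in> sets (sphere_measure :: 'a::euclidean_space measure)"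
  shows "A \<in> sets borel" "A \<subseteq> sphere 0 1"
proof -
  have "A \<in> sets (restrict_space borel (sphere (0::'a) 1))" using assms sets_sphere_measure by blast
  then show "A \<in> sets borel" "A \<subseteq> sphere 0 1"
    by (auto simp: sets_restrict_space_iff)
qed

lemma normalize_measurable:
  "(\<lambda>y::'a::euclidean_space. y /\<^sub>R norm y) \<in> restrict_space lborel (cball 0 1 - {0}) \<rightarrow>\<^sub>M restrict_space borel (sphere 0 1)"
  by (rule measurable_restrict_space2) (auto intro!: measurable_restrict_space1 simp: norm_divide)

lemma emeasure_sphere_measure:
  assumes B: "B \<in> sets borel" "B \<subseteq> sphere 0 1"
  shows "emeasure (sphere_measure::'a::euclidean_space measure) B =
    of_nat DIM('a) * emeasure lborel {y \<in> cball 0 1 - {0}. y /\<^sub>R norm y \<in> B}"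
proof -
  have Bs: "B \<in> sets (restrict_space borel (sphere (0::'a) 1))"
    using B by (auto simp: sets_restrict_space_iff)
  have "emeasure (distr (restrict_space lborel (cball 0 1 - {0})) (restrict_space borel (sphere (0::'a) 1))
              (\<lambda>y. y /\<^sub>R norm y)) B
     = emeasure (restrict_space lborel (cball 0 1 - {0})) ((\<lambda>y. y /\<^sub>R norm y) -` B \<inter> (cball 0 1 - {0}))"
    by (subst emeasure_distr[OF normalize_measurable Bs]) (simp add: space_restrict_space)
  also have "\<dots> = emeasure lborel {y \<in> cball 0 1 - {0}. y /\<^sub>R norm y \<in> B}"
  proof (subst emeasure_restrict_space)
    show "(cball 0 1 - {0}) \<inter> space lborel \<in> sets lborel" by auto
    have "(\<lambda>y::'a. y /\<^sub>R norm y) -` B \<inter> (cball 0 1 - {0}) \<in> sets lborel"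
    proof -
      have "(\<lambda>y::'a. y /\<^sub>R norm y) \<in> borel_measurable borel" by measurable
      then have "(\<lambda>y::'a. y /\<^sub>R norm y) -` B \<inter> space borel \<in> sets borel"
        using measurable_sets B(1) by blast
      then show ?thesis by auto
    qed
    then show "(\<lambda>y::'a. y /\<^sub>R norm y) -` B \<inter> (cball 0 1 - {0}) \<subseteq> (cball 0 1 - {0})" by auto
    show "emeasure lborel ((\<lambda>y::'a. y /\<^sub>R norm y) -` B \<inter> (cball 0 1 - {0})) = emeasure lborel {y \<in> cball 0 1 - {0}. y /\<^sub>R norm y \<in> B}"
      by (rule arg_cong[where f="emeasure lborel"]) auto
  qed
  finally show ?thesis unfolding sphere_measure_def by simp
qed

lemma nn_integral_great_sphere:
  fixes T :: "'b::euclidean_space \<Rightarrow> 'a::euclidean_space"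
  assumes lin: "linear T" and h[measurable]: "h \<in> borel_measurable borel"
  shows "(\<integral>\<^sup>+v. h v \<partial>great_sphere_measure T) =
     of_nat DIM('b) * (\<integral>\<^sup>+u. indicator (cball 0 1 - {0}) u * h (T (u /\<^sub>R norm u)) \<partial>lborel)"
proof -
  have Tm[measurable]: "T \<in> borel_measurable borel"
    using lin by (intro borel_measurable_continuous_onI) (simp add: linear_continuous_on linear_linear)
  have ms: "measurable (sphere_measure :: 'b measure) = measurable (restrict_space borel (sphere (0::'b) 1))"
    by (intro ext measurable_cong_sets) (simp_all add: sets_sphere_measure)
  have T1: "T \<in> (sphere_measure :: 'b measure) \<rightarrow>\<^sub>M borel"
    unfolding ms by (rule measurable_restrict_space1) simp
  have hT: "(\<lambda>v. h (T v)) \<in> borel_measurable (restrict_space borel (sphere (0::'b) 1))"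
    by (rule measurable_restrict_space1) simp
  have "(\<integral>\<^sup>+v. h v \<partial>great_sphere_measure T) = (\<integral>\<^sup>+v. h (T v) \<partial>(sphere_measure :: 'b measure))"
    unfolding great_sphere_measure_def by (subst nn_integral_distr[OF T1]) auto
  also have "\<dots> = of_nat DIM('b) * (\<integral>\<^sup>+v. h (T v) \<partial>distr (restrict_space lborel (cball 0 1 - {0})) (restrict_space borel (sphere (0::'b) 1))
              (\<lambda>y. y /\<^sub>R norm y))"
    unfolding sphere_measure_def by (subst nn_integral_scale_measure) (use hT in auto)
  also have "(\<integral>\<^sup>+v. h (T v) \<partial>distr (restrict_space lborel (cball 0 1 - {0})) (restrict_space borel (sphere (0::'b) 1))
              (\<lambda>y. y /\<^sub>R norm y)) = (\<integral>\<^sup>+u. h (T (u /\<^sub>R norm u)) \<partial>restrict_space lborel (cball 0 1 - {0}))"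
    by (subst nn_integral_distr[OF normalize_measurable]) (use hT in auto)
  also have "\<dots> = (\<integral>\<^sup>+u. h (T (u /\<^sub>R norm u)) * indicator (cball 0 1 - {0}) u \<partial>lborel)"
    by (subst nn_integral_restrict_space) auto
  finally show ?thesis by (simp add: mult.commute)
qed




lemma perp_isometry_props:
  assumes "perp_isometry x T"
  shows "linear T" "\<And>u. norm (T u) = norm u" "\<And>u. T u \<bullet> x = 0" "range T = {v. v \<bullet> x = 0}"
  using assms unfolding perp_isometry_def by auto

lemma norm_sx_Tu:
  assumes x: "norm x = 1" and T: "perp_isometry x T"
  shows "norm (s *\<^sub>R x + T u) = sqrt (s^2 + (norm u)^2)"
proof -
  have "(s *\<^sub>R x + T u) \<bullet> (s *\<^sub>R x + T u) = s^2 * (x \<bullet> x) + 2 * s * (T u \<bullet> x) + T u \<bullet> T u"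
    by (simp add: inner_add_left inner_add_right inner_commute power2_eq_square algebra_simps)
  also have "\<dots> = s^2 + (norm u)^2"
    using perp_isometry_props[OF T] x by (simp add: norm_eq_sqrt_inner[symmetric] power2_norm_eq_inner[symmetric])
  finally show ?thesis by (simp add: norm_eq_sqrt_inner)
qed

lemma cone_decomp:
  fixes x :: "'a::euclidean_space" and T :: "'b::euclidean_space \<Rightarrow> 'a"
  assumes x: "norm x = 1" and T: "perp_isometry x T" and dim: "DIM('a) = DIM('b) + 1"
    and K[measurable]: "K \<in> sets borel"
  shows "emeasure lborel K = (\<integral>\<^sup>+u. (\<integral>\<^sup>+s. indicator K (s *\<^sub>R x + T u) \<partial>lborel) \<partial>lborel)"
proof -
  note Tp = perp_isometry_props[OF T]
  define L :: "'b \<times> real \<Rightarrow> 'a" where "L = (\<lambda>(u,s). s *\<^sub>R x + T u)"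
  have linL: "linear L"
    unfolding L_def by (rule linearI) (auto simp: linear_add[OF Tp(1)] linear_scale[OF Tp(1)] algebra_simps scaleR_add_right)
  have normL: "norm (L w) = norm w" for w
    by (cases w) (simp add: L_def norm_sx_Tu[OF x T, unfolded add.commute[of "_ *\<^sub>R x"]] norm_Pair add.commute)
  have surjL: "surj L"
  proof -
    have "y \<in> range L" for y
    proof -
      have "y - (y \<bullet> x) *\<^sub>R x \<in> range T"
        using x by (simp add: Tp(4) inner_diff_left norm_eq_1)
      then obtain u where "T u = y - (y \<bullet> x) *\<^sub>R x" by auto
      then have "L (u, y \<bullet> x) = y" by (simp add: L_def)
      then show ?thesis by (metis rangeI)
    qed
    then show ?thesis by auto
  qed
  have dimL: "DIM('b \<times> real) = DIM('a)" using dim by simp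
  have Lm[measurable]: "L \<in> borel_measurable borel"
    using linL by (intro borel_measurable_continuous_onI) (simp add: linear_continuous_on linear_linear)
  have "emeasure lborel K = emeasure (distr lborel borel L) K"
    by (simp add: rot_lborel[OF linL normL surjL dimL])
  also have "\<dots> = emeasure (lborel :: ('b \<times> real) measure) (L -` K)"
    by (subst emeasure_distr) auto
  also have "\<dots> = emeasure (lborel \<Otimes>\<^sub>M lborel) (L -` K)"
    by (simp add: lborel_prod)
  also have "\<dots> = (\<integral>\<^sup>+u. emeasure lborel (Pair u -` (L -` K)) \<partial>lborel)"
  proof (rule lborel.emeasure_pair_measure_alt)
    have "L -` K \<in> sets borel" using measurable_sets[OF Lm K] by simp
    then show "L -` K \<in> sets (lborel \<Otimes>\<^sub>M lborel)" by (simp only: lborel_prod sets_lborel)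
  qed
  also have "\<dots> = (\<integral>\<^sup>+u. (\<integral>\<^sup>+s. indicator K (s *\<^sub>R x + T u) \<partial>lborel) \<partial>lborel)"
  proof (rule nn_integral_cong)
    fix u
    have "{s::real. s *\<^sub>R x + T u \<in> K} \<in> sets borel" by measurable
    moreover have "Pair u -` (L -` K) = {s::real. s *\<^sub>R x + T u \<in> K}" by (auto simp: L_def)
    ultimately have "Pair u -` (L -` K) \<in> sets borel" by simp
    then have "emeasure lborel (Pair u -` (L -` K)) = (\<integral>\<^sup>+s. indicator (Pair u -` (L -` K)) s \<partial>lborel)"
      by (simp add: nn_integral_indicator)
    also have "\<dots> = (\<integral>\<^sup>+s. indicator K (s *\<^sub>R x + T u) \<partial>lborel)"
      by (rule nn_integral_cong) (simp add: L_def indicator_def)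
    finally show "emeasure lborel (Pair u -` (L -` K)) = (\<integral>\<^sup>+s. indicator K (s *\<^sub>R x + T u) \<partial>lborel)" .
  qed
  finally show ?thesis .
qed




lemma norm_gam:
  assumes x: "norm x = 1" and w: "norm w = 1" and xw: "w \<bullet> x = 0"
  shows "norm (gam x w \<phi>) = 1"
proof -
  have "gam x w \<phi> \<bullet> gam x w \<phi> = (cos \<phi>)^2 * (x \<bullet> x) + 2 * cos \<phi> * sin \<phi> * (w \<bullet> x) + (sin \<phi>)^2 * (w \<bullet> w)"
    by (simp add: gam_def inner_add_left inner_add_right inner_commute power2_eq_square algebra_simps)
  also have "\<dots> = 1" using x w xw by (simp add: power2_norm_eq_inner[symmetric])
  finally show ?thesis by (simp add: norm_eq_sqrt_inner)
qed

lemma norm_line: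
  assumes x: "norm x = 1" and w: "norm w = 1" and xw: "w \<bullet> x = 0"
  shows "norm (s *\<^sub>R x + r *\<^sub>R w) = sqrt (s^2 + r^2)"
proof -
  have "(s *\<^sub>R x + r *\<^sub>R w) \<bullet> (s *\<^sub>R x + r *\<^sub>R w) = s^2 * (x \<bullet> x) + 2 * s * r * (w \<bullet> x) + r^2 * (w \<bullet> w)"
    by (simp add: inner_add_left inner_add_right inner_commute power2_eq_square algebra_simps)
  also have "\<dots> = s^2 + r^2" using x w xw by (simp add: power2_norm_eq_inner[symmetric])
  finally show ?thesis by (simp add: norm_eq_sqrt_inner)
qed

lemma sin_ge_arcsin:
  assumes r: "0 \<le> r" "r \<le> 1" and \<phi>: "arcsin r \<le> \<phi>" "\<phi> \<le> pi - arcsin r"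
  shows "r \<le> sin \<phi>"
proof -
  have a: "0 \<le> arcsin r" "arcsin r \<le> pi/2" using r arcsin_le_arcsin[of 0 r] arcsin_le_arcsin[of r 1] by auto
  show ?thesis
  proof (cases "\<phi> \<le> pi/2")
    case True
    then have "sin (arcsin r) \<le> sin \<phi>" using a \<phi> by (intro sin_monotone_2pi_le) auto
    then show ?thesis using r by simp
  next
    case False
    then have "sin (arcsin r) \<le> sin (pi - \<phi>)" using a \<phi> by (intro sin_monotone_2pi_le) auto
    then show ?thesis using r by simp
  qed
qed




lemma cone_meas:
  assumes "B \<in> sets borel"
  shows "{y::'a::euclidean_space \<in> cball 0 1 - {0}. y /\<^sub>R norm y \<in> B} \<in> sets borel"
proof -
  have "(\<lambda>y::'a. y /\<^sub>R norm y) \<in> borel_measurable borel" by measurable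
  then have "(\<lambda>y::'a. y /\<^sub>R norm y) -` B \<inter> space borel \<in> sets borel"
    using measurable_sets assms by blast
  then have "(cball 0 1 - {0}) \<inter> ((\<lambda>y::'a. y /\<^sub>R norm y) -` B \<inter> space borel) \<in> sets borel"
    by (intro sets.Int) auto
  also have "(cball 0 1 - {0}) \<inter> ((\<lambda>y::'a. y /\<^sub>R norm y) -` B \<inter> space borel) = {y::'a \<in> cball 0 1 - {0}. y /\<^sub>R norm y \<in> B}"
    by auto
  finally show ?thesis .
qed

lemma line_subst:
  fixes x w :: "'a::euclidean_space"
  assumes x: "norm x = 1" and w: "norm w = 1" and xw: "w \<bullet> x = 0" and r: "0 < r"
    and B[measurable]: "B \<in> sets borel"
  shows "(\<integral>\<^sup>+s. indicator {y \<in> cball 0 1 - {0}. y /\<^sub>R norm y \<in> B} (s *\<^sub>R x + r *\<^sub>R w) \<partial>lborel) \<le>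
    (\<integral>\<^sup>+\<phi>. indicator {0<..<pi} \<phi> * indicator {\<phi>. r \<le> sin \<phi>} \<phi> * indicator B (gam x w \<phi>) * ennreal (r / (sin \<phi>)^2) \<partial>lborel)"
proof -
  define K where "K = {y \<in> cball 0 1 - {0}. y /\<^sub>R norm y \<in> B}"
  have K[measurable]: "K \<in> sets borel" unfolding K_def by (rule cone_meas) simp
  have nl: "norm (s *\<^sub>R x + r *\<^sub>R w) = sqrt (s^2 + r^2)" for s
    by (rule norm_line[OF x w xw])
  show ?thesis
  proof (cases "r \<le> 1")
    case False
    have "indicator K (s *\<^sub>R x + r *\<^sub>R w) = (0::ennreal)" for s
    proof -
      have "1 < r" using False by simp
      also have "r = sqrt (r^2)" using r by simp
      also have "\<dots> \<le> sqrt (s^2 + r^2)" by simp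
      finally show ?thesis by (auto simp: K_def nl indicator_def)
    qed
    then show ?thesis unfolding K_def[symmetric] by simp
  next
    case True
    define a where "a = arcsin r"
    define b where "b = pi - a"
    define g where "g \<phi> = -(r * cos \<phi> / sin \<phi>)" for \<phi>
    define g' where "g' \<phi> = r / (sin \<phi>)^2" for \<phi>
    define f where "f s = (indicator K ((-s) *\<^sub>R x + r *\<^sub>R w) :: real)" for s
    have a: "0 < a" "a \<le> pi/2" "sin a = r" "cos a = sqrt (1 - r^2)"
      using r True arcsin_less_arcsin[of 0 r] arcsin_le_arcsin[of r 1]
      by (auto simp: a_def cos_arcsin)
    have ab: "a \<le> b" using a by (simp add: b_def)
    have bpi: "b < pi" using a by (simp add: b_def)
    have singe: "r \<le> sin \<phi>" if "\<phi> \<in> {a..b}" for \<phi>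
      using that r True by (intro sin_ge_arcsin) (auto simp: a_def b_def)
    have ga: "g a = - sqrt (1 - r^2)" using a r by (simp add: g_def)
    have gb: "g b = sqrt (1 - r^2)" using a r by (simp add: g_def b_def)
    have fm[measurable]: "f \<in> borel_measurable borel" unfolding f_def by measurable
    have step1: "(\<integral>\<^sup>+s. indicator K (s *\<^sub>R x + r *\<^sub>R w) \<partial>lborel) = (\<integral>\<^sup>+s. ennreal (f s) \<partial>lborel)"
    proof -
      have "(\<integral>\<^sup>+s. indicator K (s *\<^sub>R x + r *\<^sub>R w) \<partial>lborel) =
            (\<integral>\<^sup>+s. (\<lambda>s. indicator K (s *\<^sub>R x + r *\<^sub>R w)) (0 - s) \<partial>lborel)"
        by (rule lborel_reflect[symmetric]) measurable
      then show ?thesis by (simp add: f_def ennreal_indicator)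
    qed
    have step2: "(\<integral>\<^sup>+s. ennreal (f s) \<partial>lborel) = (\<integral>\<^sup>+s. ennreal (f s * indicator {g a..g b} s) \<partial>lborel)"
    proof (rule nn_integral_cong)
      fix s :: real
      show "ennreal (f s) = ennreal (f s * indicator {g a..g b} s)"
      proof (cases "f s = 0")
        case False
        then have "norm ((-s) *\<^sub>R x + r *\<^sub>R w) \<le> 1" by (auto simp: f_def K_def indicator_def)
        then have "sqrt (s^2 + r^2) \<le> 1" using nl[of "-s"] by simp
        then have "s^2 \<le> 1 - r^2" by (simp add: real_sqrt_le_1_iff)
        then have "\<bar>s\<bar> \<le> sqrt (1 - r^2)" by (simp add: real_le_rsqrt)
        then show ?thesis by (auto simp: ga gb indicator_def abs_le_iff)
      qed simp
    qed
    have step3: "(\<integral>\<^sup>+s. ennreal (f s * indicator {g a..g b} s) \<partial>lborel) =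
        (\<integral>\<^sup>+\<phi>. ennreal (f (g \<phi>) * g' \<phi> * indicator {a..b} \<phi>) \<partial>lborel)"
    proof (rule nn_integral_substitution)
      show "set_borel_measurable borel {g a..g b} f" unfolding set_borel_measurable_def by measurable
      show "a \<le> b" by (rule ab)
      fix \<phi> assume \<phi>: "\<phi> \<in> {a..b}"
      have sp: "sin \<phi> > 0" using singe[OF \<phi>] r by simp
      have d1: "((\<lambda>y. r * cos y / sin y) has_real_derivative
          ((r * - sin \<phi>) * sin \<phi> - cos \<phi> * (r * cos \<phi>)) / (sin \<phi> ^ Suc (Suc 0))) (at \<phi>)"
      proof -
        have dc: "((\<lambda>y. r * cos y) has_real_derivative r * - sin \<phi>) (at \<phi>)"
          by (intro DERIV_cmult DERIV_cos)
        have ds: "(sin has_real_derivative cos \<phi>) (at \<phi>)" by (rule DERIV_sin)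
        show ?thesis using DERIV_quotient[OF dc ds] sp by simp
      qed
      have e: "cos \<phi> * cos \<phi> + sin \<phi> * sin \<phi> = 1" by simp
      have num: "(r * - sin \<phi>) * sin \<phi> - cos \<phi> * (r * cos \<phi>) = - r"
        using e by algebra
      have d2: "((\<lambda>y. - (r * cos y / sin y)) has_real_derivative
          - (((r * - sin \<phi>) * sin \<phi> - cos \<phi> * (r * cos \<phi>)) / (sin \<phi> ^ Suc (Suc 0)))) (at \<phi>)"
        by (rule DERIV_minus[OF d1])
      show "(g has_real_derivative g' \<phi>) (at \<phi>)"
        using d2 unfolding g_def g'_def num by (simp add: numeral_2_eq_2)
      show "0 \<le> g' \<phi>" using sp r by (simp add: g'_def)
    next
      have "\<forall>\<phi>\<in>{a..b}. sin \<phi> ^ 2 \<noteq> 0"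
        using singe r by fastforce
      then show "continuous_on {a..b} g'" unfolding g'_def by (intro continuous_intros) auto
    qed
    have step4: "ennreal (f (g \<phi>) * g' \<phi> * indicator {a..b} \<phi>) \<le>
       indicator {0<..<pi} \<phi> * indicator {\<phi>. r \<le> sin \<phi>} \<phi> * indicator B (gam x w \<phi>) * ennreal (r / (sin \<phi>)^2)" for \<phi>
    proof (cases "\<phi> \<in> {a..b}")
      case False then show ?thesis by simp
    next
      case True
      have rs: "r \<le> sin \<phi>" by (rule singe[OF True])
      have sp: "sin \<phi> > 0" using rs r by simp
      have ph: "\<phi> \<in> {0<..<pi}" using True a bpi by auto
      have v: "(-(g \<phi>)) *\<^sub>R x + r *\<^sub>R w = (r / sin \<phi>) *\<^sub>R gam x w \<phi>"
        using sp by (simp add: g_def gam_def scaleR_add_right)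
      have ng: "norm (gam x w \<phi>) = 1" by (rule norm_gam[OF x w xw])
      have nv: "norm ((r / sin \<phi>) *\<^sub>R gam x w \<phi>) = r / sin \<phi>" using ng sp r by simp
      have le1: "r / sin \<phi> \<le> 1" using rs sp by simp
      have dir: "((r / sin \<phi>) *\<^sub>R gam x w \<phi>) /\<^sub>R (r / sin \<phi>) = gam x w \<phi>" using sp r by simp
      have fg: "f (g \<phi>) = indicator B (gam x w \<phi>)"
        unfolding f_def v using nv le1 dir sp r by (auto simp: K_def indicator_def)
      show ?thesis using True ph rs
        by (simp add: fg g'_def indicator_def ennreal_mult'')
    qed
    have "(\<integral>\<^sup>+s. indicator K (s *\<^sub>R x + r *\<^sub>R w) \<partial>lborel) =
        (\<integral>\<^sup>+\<phi>. ennreal (f (g \<phi>) * g' \<phi> * indicator {a..b} \<phi>) \<partial>lborel)"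
      using step1 step2 step3 by simp
    also have "\<dots> \<le> (\<integral>\<^sup>+\<phi>. indicator {0<..<pi} \<phi> * indicator {\<phi>. r \<le> sin \<phi>} \<phi> * indicator B (gam x w \<phi>) * ennreal (r / (sin \<phi>)^2) \<partial>lborel)"
      by (rule nn_integral_mono) (rule step4)
    finally show ?thesis unfolding K_def .
  qed
qed




lemma scale_bound:
  fixes T :: "'b::euclidean_space \<Rightarrow> 'a::euclidean_space"
  assumes lin: "linear T" and B[measurable]: "B \<in> sets borel" and \<phi>: "\<phi> \<in> {0<..<pi}"
  shows "(\<integral>\<^sup>+u. indicator (-{0}) u * indicator {0<..<pi} \<phi> * indicator {\<phi>. norm u \<le> sin \<phi>} \<phi> *
            indicator B (gam x (T u /\<^sub>R norm u) \<phi>) * ennreal (norm u / (sin \<phi>)^2) \<partial>lborel)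
       \<le> (\<integral>\<^sup>+v. indicator (cball 0 1 - {0}) v * indicator B (gam x (T v /\<^sub>R norm v) \<phi>) \<partial>lborel)"
proof -
  have Tm[measurable]: "T \<in> borel_measurable borel"
    using lin by (intro borel_measurable_continuous_onI) (simp add: linear_continuous_on linear_linear)
  define c where "c = sin \<phi>"
  have c: "0 < c" "c \<le> 1" using \<phi> by (auto simp: c_def sin_gt_zero)
  define F where "F u = indicator (-{0}) u * indicator {\<phi>. norm u \<le> c} \<phi> *
            indicator B (gam x (T u /\<^sub>R norm u) \<phi>) * ennreal (norm u / c^2)" for u :: 'b
  have Fm[measurable]: "F \<in> borel_measurable borel"
    unfolding F_def gam_def by measurable
  have "(\<integral>\<^sup>+u. indicator (-{0}) u * indicator {0<..<pi} \<phi> * indicator {\<phi>. norm u \<le> sin \<phi>} \<phi> *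
            indicator B (gam x (T u /\<^sub>R norm u) \<phi>) * ennreal (norm u / (sin \<phi>)^2) \<partial>lborel)
       = (\<integral>\<^sup>+u. F u \<partial>lborel)"
    using \<phi> by (intro nn_integral_cong) (simp add: F_def c_def indicator_def)
  also have "\<dots> = (\<integral>\<^sup>+u. F u \<partial>density (distr lborel borel (\<lambda>v. 0 + c *\<^sub>R v)) (\<lambda>_. \<bar>c\<bar> ^ DIM('b)))"
    using lborel_affine[of c "0::'b"] c by simp
  also have "\<dots> = (\<integral>\<^sup>+v. ennreal (c ^ DIM('b)) * F (c *\<^sub>R v) \<partial>lborel)"
    using c by (simp add: nn_integral_density nn_integral_distr)
  also have "\<dots> \<le> (\<integral>\<^sup>+v. indicator (cball 0 1 - {0}) v * indicator B (gam x (T v /\<^sub>R norm v) \<phi>) \<partial>lborel)"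
  proof (rule nn_integral_mono)
    fix v :: 'b
    show "ennreal (c ^ DIM('b)) * F (c *\<^sub>R v) \<le> indicator (cball 0 1 - {0}) v * indicator B (gam x (T v /\<^sub>R norm v) \<phi>)"
    proof (cases "v \<noteq> 0 \<and> norm v \<le> 1")
      case False
      then have "F (c *\<^sub>R v) = 0" using c by (auto simp: F_def indicator_def)
      then show ?thesis by simp
    next
      case True
      have dir: "T (c *\<^sub>R v) /\<^sub>R norm (c *\<^sub>R v) = T v /\<^sub>R norm v"
        using c True by (simp add: linear_scale[OF lin])
      have pw: "c ^ DIM('b) \<le> c"
      proof -
        have "c ^ DIM('b) \<le> c ^ 1" using c by (intro power_decreasing) (auto simp: DIM_positive Suc_leI)
        then show ?thesis by simp
      qed
      have num: "c ^ DIM('b) * (norm (c *\<^sub>R v) / c^2) \<le> 1"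
      proof -
        have "c ^ DIM('b) * (norm (c *\<^sub>R v) / c^2) = c ^ DIM('b) * norm v / c"
          using c by (simp add: power2_eq_square)
        also have "\<dots> \<le> c * norm v / c"
          using pw c by (intro divide_right_mono mult_right_mono) auto
        also have "\<dots> \<le> 1" using c True by simp
        finally show ?thesis .
      qed
      have Fcv: "F (c *\<^sub>R v) = indicator B (gam x (T v /\<^sub>R norm v) \<phi>) * ennreal (norm (c *\<^sub>R v) / c^2)"
        unfolding F_def dir using c True by (simp add: indicator_def)
      have em: "ennreal (c ^ DIM('b)) * ennreal (norm (c *\<^sub>R v) / c^2) = ennreal (c ^ DIM('b) * (norm (c *\<^sub>R v) / c^2))"
        by (rule ennreal_mult[symmetric]) (use c in auto)
      have "ennreal (c ^ DIM('b)) * F (c *\<^sub>R v) = indicator B (gam x (T v /\<^sub>R norm v) \<phi>) *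
              ennreal (c ^ DIM('b) * (norm (c *\<^sub>R v) / c^2))"
        unfolding Fcv em[symmetric] by (simp add: ac_simps)
      also have "\<dots> \<le> indicator B (gam x (T v /\<^sub>R norm v) \<phi>) * 1"
        using num by (intro mult_left_mono) (auto simp: ennreal_le_1)
      also have "\<dots> = indicator (cball 0 1 - {0}) v * indicator B (gam x (T v /\<^sub>R norm v) \<phi>)"
        using True by (simp add: indicator_def)
      finally show ?thesis .
    qed
  qed
  finally show ?thesis .
qed




lemma core_half:
  fixes x :: "'a::euclidean_space" and T :: "'b::euclidean_space \<Rightarrow> 'a"
  assumes x: "norm x = 1" and T: "perp_isometry x T" and dim: "DIM('a) = DIM('b) + 1"
    and B[measurable]: "B \<in> sets borel"
  shows "emeasure lborel {y \<in> cball 0 1 - {0}. y /\<^sub>R norm y \<in> B} \<le>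
    (\<integral>\<^sup>+\<phi>. indicator {0<..<pi} \<phi> * (\<integral>\<^sup>+v. indicator (cball 0 1 - {0}) v * indicator B (gam x (T v /\<^sub>R norm v) \<phi>) \<partial>lborel) \<partial>lborel)"
proof -
  note Tp = perp_isometry_props[OF T]
  have Tm[measurable]: "T \<in> borel_measurable borel"
    using Tp(1) by (intro borel_measurable_continuous_onI) (simp add: linear_continuous_on linear_linear)
  define K where "K = {y \<in> cball 0 1 - {0}. y /\<^sub>R norm y \<in> B}"
  have K[measurable]: "K \<in> sets borel" unfolding K_def by (rule cone_meas) simp
  define \<Phi> where "\<Phi> u \<phi> = indicator (-{0}) u * indicator {0<..<pi} \<phi> * indicator {\<phi>. norm u \<le> sin \<phi>} \<phi> *
            indicator B (gam x (T u /\<^sub>R norm u) \<phi>) * ennreal (norm u / (sin \<phi>)^2)" for u :: 'b and \<phi> :: real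
  have \<Phi>m: "(\<lambda>(u,\<phi>). \<Phi> u \<phi>) \<in> borel_measurable (lborel \<Otimes>\<^sub>M lborel)"
    unfolding \<Phi>_def gam_def by measurable
  have "emeasure lborel K = (\<integral>\<^sup>+u. (\<integral>\<^sup>+s. indicator K (s *\<^sub>R x + T u) \<partial>lborel) \<partial>lborel)"
    by (rule cone_decomp[OF x T dim K])
  also have "\<dots> \<le> (\<integral>\<^sup>+u. (\<integral>\<^sup>+\<phi>. \<Phi> u \<phi> \<partial>lborel) \<partial>lborel)"
  proof (rule nn_integral_mono_AE)
    show "AE u in lborel. (\<integral>\<^sup>+s. indicator K (s *\<^sub>R x + T u) \<partial>lborel) \<le> (\<integral>\<^sup>+\<phi>. \<Phi> u \<phi> \<partial>lborel)"
      using AE_lborel_singleton[of "0::'b"]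
    proof eventually_elim
      case (elim u)
      define w where "w = T u /\<^sub>R norm u"
      have nu: "norm u > 0" using elim by simp
      have Tu: "T u = norm u *\<^sub>R w" using nu by (simp add: w_def)
      have w: "norm w = 1" using nu by (simp add: w_def Tp(2))
      have wx: "w \<bullet> x = 0" by (simp add: w_def Tp(3))
      have "(\<integral>\<^sup>+s. indicator K (s *\<^sub>R x + T u) \<partial>lborel) \<le>
        (\<integral>\<^sup>+\<phi>. indicator {0<..<pi} \<phi> * indicator {\<phi>. norm u \<le> sin \<phi>} \<phi> * indicator B (gam x w \<phi>) * ennreal (norm u / (sin \<phi>)^2) \<partial>lborel)"
        unfolding Tu K_def by (rule line_subst[OF x w wx nu B])
      also have "\<dots> = (\<integral>\<^sup>+\<phi>. \<Phi> u \<phi> \<partial>lborel)"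
        using elim by (intro nn_integral_cong) (simp add: \<Phi>_def w_def)
      finally show ?case .
    qed
  qed
  also have "\<dots> = (\<integral>\<^sup>+\<phi>. (\<integral>\<^sup>+u. \<Phi> u \<phi> \<partial>lborel) \<partial>lborel)"
    by (rule lborel_pair.Fubini'[symmetric]) (rule \<Phi>m)
  also have "\<dots> \<le> (\<integral>\<^sup>+\<phi>. indicator {0<..<pi} \<phi> * (\<integral>\<^sup>+v. indicator (cball 0 1 - {0}) v * indicator B (gam x (T v /\<^sub>R norm v) \<phi>) \<partial>lborel) \<partial>lborel)"
  proof (rule nn_integral_mono)
    fix \<phi> :: real
    show "(\<integral>\<^sup>+u. \<Phi> u \<phi> \<partial>lborel) \<le> indicator {0<..<pi} \<phi> * (\<integral>\<^sup>+v. indicator (cball 0 1 - {0}) v * indicator B (gam x (T v /\<^sub>R norm v) \<phi>) \<partial>lborel)"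
    proof (cases "\<phi> \<in> {0<..<pi}")
      case True
      then show ?thesis unfolding \<Phi>_def using scale_bound[OF Tp(1) B True, of x] by simp
    next
      case False
      then show ?thesis by (simp add: \<Phi>_def)
    qed
  qed
  finally show ?thesis unfolding K_def .
qed




lemma perp_isometry_neg:
  assumes "perp_isometry x T"
  shows "perp_isometry x (\<lambda>v. - T v)"
proof -
  note Tp = perp_isometry_props[OF assms]
  have "linear (\<lambda>v. - T v)" using Tp(1) by (simp add: linear_compose_neg)
  moreover have "\<forall>u. norm (- T u) = norm u" using Tp(2) by simp
  moreover have "range (\<lambda>v. - T v) = {v. v \<bullet> x = 0}"
  proof
    show "range (\<lambda>v. - T v) \<subseteq> {v. v \<bullet> x = 0}" using Tp(3) by auto
    show "{v. v \<bullet> x = 0} \<subseteq> range (\<lambda>v. - T v)"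
    proof
      fix y assume "y \<in> {v. v \<bullet> x = 0}"
      then have "- y \<in> range T" using Tp(4) by simp
      then obtain u where "T u = - y" by auto
      then have "y = - T u" by simp
      then show "y \<in> range (\<lambda>v. - T v)" by blast
    qed
  qed
  ultimately show ?thesis unfolding perp_isometry_def by blast
qed

lemma gam_neg: "gam x (- w) \<phi> = gam x w (2 * pi - \<phi>)"
  by (simp add: gam_def sin_diff cos_diff)

lemma core_full:
  fixes x :: "'a::euclidean_space" and T :: "'b::euclidean_space \<Rightarrow> 'a"
  assumes x: "norm x = 1" and T: "perp_isometry x T" and dim: "DIM('a) = DIM('b) + 1"
    and B[measurable]: "B \<in> sets borel"
  shows "2 * emeasure lborel {y \<in> cball 0 1 - {0}. y /\<^sub>R norm y \<in> B} \<le>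
    (\<integral>\<^sup>+\<phi>. indicator {0..<2*pi} \<phi> * (\<integral>\<^sup>+v. indicator (cball 0 1 - {0}) v * indicator B (gam x (T v /\<^sub>R norm v) \<phi>) \<partial>lborel) \<partial>lborel)"
proof -
  note Tp = perp_isometry_props[OF T]
  have Tm[measurable]: "T \<in> borel_measurable borel"
    using Tp(1) by (intro borel_measurable_continuous_onI) (simp add: linear_continuous_on linear_linear)
  have cb[measurable]: "cball (0::'b) 1 - {0} \<in> sets borel" by auto
  define I where "I \<phi> = (\<integral>\<^sup>+v. indicator (cball 0 1 - {0}) v * indicator B (gam x (T v /\<^sub>R norm v) \<phi>) \<partial>lborel)" for \<phi>
  have Im[measurable]: "I \<in> borel_measurable borel"
    unfolding I_def gam_def by measurable
  define LK where "LK = emeasure lborel {y \<in> cball 0 1 - {0}. y /\<^sub>R norm y \<in> B}"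
  have h1: "LK \<le> (\<integral>\<^sup>+\<phi>. indicator {0<..<pi} \<phi> * I \<phi> \<partial>lborel)"
    unfolding LK_def I_def by (rule core_half[OF x T dim B])
  have "LK \<le> (\<integral>\<^sup>+\<phi>. indicator {0<..<pi} \<phi> * (\<integral>\<^sup>+v. indicator (cball 0 1 - {0}) v * indicator B (gam x ((- T v) /\<^sub>R norm v) \<phi>) \<partial>lborel) \<partial>lborel)"
    unfolding LK_def by (rule core_half[OF x perp_isometry_neg[OF T] dim B])
  also have "\<dots> = (\<integral>\<^sup>+\<phi>. (\<lambda>\<theta>. indicator {pi<..<2*pi} \<theta> * I \<theta>) (2 * pi - \<phi>) \<partial>lborel)"
    by (intro nn_integral_cong) (auto simp: I_def gam_neg[symmetric] indicator_def)
  also have "\<dots> = (\<integral>\<^sup>+\<theta>. indicator {pi<..<2*pi} \<theta> * I \<theta> \<partial>lborel)"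
    by (rule lborel_reflect) measurable
  finally have h2: "LK \<le> (\<integral>\<^sup>+\<theta>. indicator {pi<..<2*pi} \<theta> * I \<theta> \<partial>lborel)" .
  have "2 * LK = LK + LK" by (simp add: mult_2)
  also have "\<dots> \<le> (\<integral>\<^sup>+\<phi>. indicator {0<..<pi} \<phi> * I \<phi> \<partial>lborel) + (\<integral>\<^sup>+\<theta>. indicator {pi<..<2*pi} \<theta> * I \<theta> \<partial>lborel)"
    using h1 h2 by (rule add_mono)
  also have "\<dots> = (\<integral>\<^sup>+\<phi>. indicator {0<..<pi} \<phi> * I \<phi> + indicator {pi<..<2*pi} \<phi> * I \<phi> \<partial>lborel)"
    by (rule nn_integral_add[symmetric]) measurable
  also have "\<dots> \<le> (\<integral>\<^sup>+\<phi>. indicator {0..<2*pi} \<phi> * I \<phi> \<partial>lborel)"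
    by (intro nn_integral_mono) (auto simp: indicator_def)
  finally show ?thesis unfolding LK_def I_def .
qed




lemma core_G:
  fixes x :: "'a::euclidean_space" and T :: "'b::euclidean_space \<Rightarrow> 'a"
  assumes x: "norm x = 1" and T: "perp_isometry x T" and dim: "DIM('a) = DIM('b) + 1"
    and B[measurable]: "B \<in> sets borel" and Bs: "B \<subseteq> sphere 0 1"
  shows "emeasure (sphere_measure::'a measure) B \<le>
    (\<integral>\<^sup>+v. (\<integral>\<^sup>+\<theta>. indicator {0..<2*pi} \<theta> * indicator B (gam x v \<theta>) \<partial>lborel) \<partial>great_sphere_measure T)"
proof -
  note Tp = perp_isometry_props[OF T]
  have Tm[measurable]: "T \<in> borel_measurable borel"
    using Tp(1) by (intro borel_measurable_continuous_onI) (simp add: linear_continuous_on linear_linear)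
  have cb[measurable]: "cball (0::'b) 1 - {0} \<in> sets borel" by auto
  define h where "h v = (\<integral>\<^sup>+\<theta>. indicator {0..<2*pi} \<theta> * indicator B (gam x v \<theta>) \<partial>lborel)" for v
  have hm[measurable]: "h \<in> borel_measurable borel" unfolding h_def gam_def by measurable
  define I where "I \<phi> = (\<integral>\<^sup>+v. indicator (cball 0 1 - {0}) v * indicator B (gam x (T v /\<^sub>R norm v) \<phi>) \<partial>lborel)" for \<phi>
  define LK where "LK = emeasure lborel {y \<in> cball 0 1 - {0}. y /\<^sub>R norm y \<in> B}"
  have core: "2 * LK \<le> (\<integral>\<^sup>+\<phi>. indicator {0..<2*pi} \<phi> * I \<phi> \<partial>lborel)"
    unfolding LK_def I_def by (rule core_full[OF x T dim B])
  have "(\<integral>\<^sup>+u. indicator (cball 0 1 - {0}) u * h (T (u /\<^sub>R norm u)) \<partial>lborel) =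
      (\<integral>\<^sup>+u. (\<integral>\<^sup>+\<theta>. indicator (cball 0 1 - {0}) u * (indicator {0..<2*pi} \<theta> * indicator B (gam x (T u /\<^sub>R norm u) \<theta>)) \<partial>lborel) \<partial>lborel)"
  proof (rule nn_integral_cong)
    fix u :: 'b
    show "indicator (cball 0 1 - {0}) u * h (T (u /\<^sub>R norm u)) =
      (\<integral>\<^sup>+\<theta>. indicator (cball 0 1 - {0}) u * (indicator {0..<2*pi} \<theta> * indicator B (gam x (T u /\<^sub>R norm u) \<theta>)) \<partial>lborel)"
      unfolding h_def linear_scale[OF Tp(1)]
      by (rule nn_integral_cmult[symmetric]) (unfold gam_def, measurable)
  qed
  also have "\<dots> = (\<integral>\<^sup>+\<theta>. (\<integral>\<^sup>+u. indicator (cball 0 1 - {0}) u * (indicator {0..<2*pi} \<theta> * indicator B (gam x (T u /\<^sub>R norm u) \<theta>)) \<partial>lborel) \<partial>lborel)"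
    by (rule lborel_pair.Fubini'[symmetric]) (unfold gam_def, measurable)
  also have "\<dots> = (\<integral>\<^sup>+\<theta>. indicator {0..<2*pi} \<theta> * I \<theta> \<partial>lborel)"
  proof (rule nn_integral_cong)
    fix \<theta> :: real
    have "(\<integral>\<^sup>+u. indicator (cball 0 1 - {0}) u * (indicator {0..<2*pi} \<theta> * indicator B (gam x (T u /\<^sub>R norm u) \<theta>)) \<partial>lborel)
        = (\<integral>\<^sup>+u. indicator {0..<2*pi} \<theta> * (indicator (cball 0 1 - {0}) u * indicator B (gam x (T u /\<^sub>R norm u) \<theta>)) \<partial>lborel)"
      by (simp add: ac_simps)
    also have "\<dots> = indicator {0..<2*pi} \<theta> * I \<theta>"
      unfolding I_def by (rule nn_integral_cmult) (unfold gam_def, measurable)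
    finally show "(\<integral>\<^sup>+u. indicator (cball 0 1 - {0}) u * (indicator {0..<2*pi} \<theta> * indicator B (gam x (T u /\<^sub>R norm u) \<theta>)) \<partial>lborel)
        = indicator {0..<2*pi} \<theta> * I \<theta>" .
  qed
  finally have eqJ: "(\<integral>\<^sup>+u. indicator (cball 0 1 - {0}) u * h (T (u /\<^sub>R norm u)) \<partial>lborel) = (\<integral>\<^sup>+\<theta>. indicator {0..<2*pi} \<theta> * I \<theta> \<partial>lborel)" .
  have "emeasure (sphere_measure::'a measure) B = of_nat DIM('a) * LK"
    unfolding LK_def by (rule emeasure_sphere_measure[OF B Bs])
  also have "\<dots> = of_nat (DIM('b) + 1) * LK" by (simp add: dim)
  also have "\<dots> \<le> of_nat (DIM('b) * 2) * LK"
  proof (rule mult_right_mono)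
    have "DIM('b) + 1 \<le> DIM('b) * 2" using DIM_positive[where 'a='b] by linarith
    then show "(of_nat (DIM('b)+1)::ennreal) \<le> of_nat (DIM('b) * 2)" by (rule of_nat_mono)
  qed simp
  also have "\<dots> = of_nat DIM('b) * (2 * LK)" by (simp add: ac_simps)
  also have "\<dots> \<le> of_nat DIM('b) * (\<integral>\<^sup>+\<phi>. indicator {0..<2*pi} \<phi> * I \<phi> \<partial>lborel)"
    using core by (rule mult_left_mono) simp
  also have "\<dots> = (\<integral>\<^sup>+v. h v \<partial>great_sphere_measure T)"
    by (simp add: nn_integral_great_sphere[OF Tp(1) hm] eqJ)
  finally show ?thesis unfolding h_def .
qed

theorem mainTheorem5:
  fixes p :: "'a::euclidean_space \<Rightarrow> real" and C :: "'a set"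
  assumes dim_a: "DIM('a) = DIM('b::euclidean_space) + 1"
    and d3: "DIM('a) \<ge> 3"
    and p_meas: "p \<in> borel_measurable (sphere_measure :: 'a measure)"
    and p_pos: "\<And>x. x \<in> sphere 0 1 \<Longrightarrow> p x > 0"
    and int_pos: "(\<integral>\<^sup>+ x. ennreal (p x) \<partial>(sphere_measure :: 'a measure)) > 0"
    and int_fin: "(\<integral>\<^sup>+ x. ennreal (p x) \<partial>(sphere_measure :: 'a measure)) < \<infinity>"
    and C_meas: "C \<in> sets (sphere_measure :: 'a measure)"
    and C_pos: "emeasure (sphere_measure :: 'a measure) C > 0"
    and inf_pos: "(INF y\<in>C. p y) > 0"
    and sup_fin: "bdd_above (p ` sphere 0 1)"
  shows "\<forall>x \<in> sphere 0 1. \<forall>A \<in> sets (sphere_measure :: 'a measure).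
           \<forall>T :: 'b \<Rightarrow> 'a. perp_isometry x T \<longrightarrow>
      ennreal (1 / p x) *
        (\<integral>\<^sup>+ t. indicator {0..p x} t *
           (\<integral>\<^sup>+ v. (\<integral>\<^sup>+ \<theta>. indicator (Lset p x v t) \<theta> * indicator A (gam x v \<theta>) \<partial>lborel)
              \<partial>great_sphere_measure T) \<partial>lborel)
      \<ge> ennreal ((INF y\<in>C. p y) / (SUP y\<in>sphere 0 1. p y)) *
          emeasure (sphere_measure :: 'a measure) (A \<inter> C)"
proof (intro ballI allI impI)
  fix x :: 'a and A :: "'a set" and T :: "'b \<Rightarrow> 'a"
  assume xs: "x \<in> sphere 0 1" and A: "A \<in> sets (sphere_measure :: 'a measure)" and T: "perp_isometry x T"
  have x: "norm x = 1" using xs by simp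
  note Tp = perp_isometry_props[OF T]
  have Ab: "A \<in> sets borel" "A \<subseteq> sphere 0 1" using sphere_measure_setsD[OF A] by auto
  have Cb: "C \<in> sets borel" "C \<subseteq> sphere 0 1" using sphere_measure_setsD[OF C_meas] by auto
  define B where "B = A \<inter> C"
  have Bb[measurable]: "B \<in> sets borel" "B \<subseteq> sphere 0 1" using Ab Cb by (auto simp: B_def)
  define m where "m = (INF y\<in>C. p y)"
  define S where "S = (SUP y\<in>sphere 0 1. p y)"
  define \<beta> where "\<beta> = m / S"
  have Cne: "C \<noteq> {}" using C_pos by auto
  have bddC: "bdd_below (p ` C)"
    using Cb(2) p_pos by (intro bdd_belowI[of _ 0]) (auto simp: less_imp_le)
  have mle: "m \<le> p y" if "y \<in> C" for y
    unfolding m_def using bddC that by (rule cINF_lower)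
  have pxS: "p x \<le> S" unfolding S_def using xs sup_fin by (rule cSUP_upper)
  have px: "p x > 0" using p_pos xs by simp
  have Spos: "S > 0" using pxS px by simp
  have mpos: "m > 0" using inf_pos by (simp add: m_def)
  have mS: "m \<le> S"
  proof -
    obtain c where c: "c \<in> C" using Cne by auto
    have "p c \<le> S" unfolding S_def using sup_fin Cb(2) c by (intro cSUP_upper) auto
    then show ?thesis using mle[OF c] by simp
  qed
  have \<beta>0: "0 \<le> \<beta>" using mpos Spos by (simp add: \<beta>_def)
  have \<beta>px_m: "\<beta> * p x \<le> m"
  proof -
    have "\<beta> * p x = m * (p x / S)" by (simp add: \<beta>_def)
    also have "\<dots> \<le> m * 1" using pxS Spos mpos by (intro mult_left_mono) auto
    finally show ?thesis by simp
  qed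
  have \<beta>px_px: "\<beta> * p x \<le> p x"
  proof -
    have "\<beta> \<le> 1" using mS Spos by (simp add: \<beta>_def)
    then show ?thesis using px by (simp add: mult_le_cancel_right1)
  qed
  define G where "G = (\<integral>\<^sup>+v. (\<integral>\<^sup>+\<theta>. indicator {0..<2*pi} \<theta> * indicator B (gam x v \<theta>) \<partial>lborel) \<partial>great_sphere_measure T)"
  have coreG: "emeasure (sphere_measure :: 'a measure) B \<le> G"
    unfolding G_def by (rule core_G[OF x T dim_a Bb])
  have pw: "indicator {0..<\<beta> * p x} t * G \<le>
      indicator {0..p x} t *
           (\<integral>\<^sup>+ v. (\<integral>\<^sup>+ \<theta>. indicator (Lset p x v t) \<theta> * indicator A (gam x v \<theta>) \<partial>lborel)
              \<partial>great_sphere_measure T)" for t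
  proof (cases "t \<in> {0..<\<beta> * p x}")
    case False then show ?thesis by simp
  next
    case True
    then have t1: "t \<in> {0..p x}" using \<beta>px_px by auto
    have "G \<le> (\<integral>\<^sup>+ v. (\<integral>\<^sup>+ \<theta>. indicator (Lset p x v t) \<theta> * indicator A (gam x v \<theta>) \<partial>lborel)
              \<partial>great_sphere_measure T)"
      unfolding G_def
    proof (intro nn_integral_mono)
      fix v \<theta>
      show "indicator {0..<2*pi} \<theta> * indicator B (gam x v \<theta>) \<le>
          (indicator (Lset p x v t) \<theta> * indicator A (gam x v \<theta>) :: ennreal)"
      proof (cases "\<theta> \<in> {0..<2*pi} \<and> gam x v \<theta> \<in> B")
        case True
        then have "gam x v \<theta> \<in> C" "gam x v \<theta> \<in> A" by (auto simp: B_def)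
        then have "t < p (gam x v \<theta>)"
          using mle[of "gam x v \<theta>"] \<beta>px_m \<open>t \<in> {0..<\<beta> * p x}\<close> by auto
        then have "\<theta> \<in> Lset p x v t" using True by (simp add: Lset_def)
        then show ?thesis using True \<open>gam x v \<theta> \<in> A\<close> by simp
      next
        case False then show ?thesis by (auto simp: indicator_def)
      qed
    qed
    then show ?thesis using True t1 by simp
  qed
  have "ennreal \<beta> * emeasure (sphere_measure :: 'a measure) (A \<inter> C) \<le> ennreal \<beta> * G"
    using coreG by (intro mult_left_mono) (auto simp: B_def)
  also have "ennreal \<beta> * G = ennreal (1 / p x) * ((\<integral>\<^sup>+t. indicator {0..<\<beta> * p x} t \<partial>lborel) * G)"
  proof -
    have "(\<integral>\<^sup>+t. indicator {0..<\<beta> * p x} t \<partial>lborel) = ennreal (\<beta> * p x)"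
      using \<beta>0 px by simp
    moreover have "ennreal (1 / p x) * ennreal (\<beta> * p x) = ennreal \<beta>"
      using px \<beta>0 by (simp add: ennreal_mult[symmetric])
    ultimately show ?thesis by (metis mult.assoc)
  qed
  also have "(\<integral>\<^sup>+t. indicator {0..<\<beta> * p x} t \<partial>lborel) * G = (\<integral>\<^sup>+t. indicator {0..<\<beta> * p x} t * G \<partial>lborel)"
    by (rule nn_integral_multc[symmetric]) simp
  also have "ennreal (1 / p x) * \<dots> \<le> ennreal (1 / p x) *
        (\<integral>\<^sup>+ t. indicator {0..p x} t *
           (\<integral>\<^sup>+ v. (\<integral>\<^sup>+ \<theta>. indicator (Lset p x v t) \<theta> * indicator A (gam x v \<theta>) \<partial>lborel)
              \<partial>great_sphere_measure T) \<partial>lborel)"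
    by (intro mult_left_mono nn_integral_mono pw) simp
  finally show "ennreal (1 / p x) *
        (\<integral>\<^sup>+ t. indicator {0..p x} t *
           (\<integral>\<^sup>+ v. (\<integral>\<^sup>+ \<theta>. indicator (Lset p x v t) \<theta> * indicator A (gam x v \<theta>) \<partial>lborel)
              \<partial>great_sphere_measure T) \<partial>lborel)
      \<ge> ennreal ((INF y\<in>C. p y) / (SUP y\<in>sphere 0 1. p y)) *
          emeasure (sphere_measure :: 'a measure) (A \<inter> C)"
    unfolding \<beta>_def m_def S_def by simp
qed


end
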